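(* Let $0<\alpha<1/2$. Then, as $N\to\infty$ through positive integers, \[ \frac{1}{N}\sum_{m,n=1}^{N}\frac{(m,n)^{2\alpha}}{(mn)^{\alpha}} = \frac{\zeta(2-2\alpha)}{\zeta(2)(1-\alpha)^2}\,N^{1-2\alpha}+O(1), \] where the implied constant depends only on $\alpha$.
   Context: $(m,n)$ denotes the greatest common divisor of $m$ and $n$, and $\zeta$ is the Riemann zeta function. *)

theory Defs
  imports "HOL-Analysis.Analysis"
begin

text \<open>Riemann zeta function on real arguments s > 1, given by its defining Dirichlet series.
  (Only values at 2 and 2 - 2 alpha, both > 1, are needed.)\<close>
definition zeta_real :: "real \<Rightarrow> real" where
  "zeta_real s = (\<Sum>n. 1 / real (Suc n) powr s)"

end

theory Submission
  imports Defs "HOL-Computational_Algebra.Primes"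
begin


definition hh :: "real \<Rightarrow> nat \<Rightarrow> real" where
  "hh a d = real d powr a * (\<Prod>p\<in>prime_factors d. (1 - real p powr (-a)))"

lemma hh_nonneg: "a \<ge> 0 \<Longrightarrow> 0 \<le> hh a d"
  unfolding hh_def
proof (intro mult_nonneg_nonneg prod_nonneg ballI)
  fix p assume "a \<ge> 0" "p \<in> prime_factors d"
  then have "real p \<ge> 1" using prime_gt_0_nat[of p] by (auto simp: in_prime_factors_iff)
  then have "real p powr (-a) \<le> 1" using \<open>a\<ge>0\<close> by (simp add: powr_le_one_le ge_one_powr_ge_zero powr_minus_divide)
  then show "0 \<le> 1 - real p powr (-a)" by simp
qed simp

lemma hh_le: "a \<ge> 0 \<Longrightarrow> hh a d \<le> real d powr a"
  unfolding hh_def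
proof -
  assume "a \<ge> 0"
  have "(\<Prod>p\<in>prime_factors d. (1 - real p powr (-a))) \<le> 1"
  proof (rule prod_le_1)
    fix p assume "p \<in> prime_factors d"
    then have "real p \<ge> 1" using prime_gt_0_nat[of p] by (auto simp: in_prime_factors_iff)
    then have "real p powr (-a) \<le> 1" using \<open>a\<ge>0\<close> by (simp add: powr_le_one_le ge_one_powr_ge_zero powr_minus_divide)
    then show "0 \<le> 1 - real p powr (-a) \<and> 1 - real p powr (-a) \<le> 1" by simp
  qed
  then show "real d powr a * (\<Prod>p\<in>prime_factors d. (1 - real p powr (-a))) \<le> real d powr a"
    by (simp add: mult_left_le)
qed

lemma hh_mult: assumes "coprime x y" shows "hh a (x*y) = hh a x * hh a y"
proof (cases "x = 0 \<or> y = 0")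
  case True
  with assms show ?thesis by (auto simp: hh_def)
next
  case False
  have disj: "prime_factors x \<inter> prime_factors y = {}"
  proof (rule ccontr)
    assume "prime_factors x \<inter> prime_factors y \<noteq> {}"
    then obtain p where "p \<in> prime_factors x" "p \<in> prime_factors y" by blast
    then have "prime p" "p dvd x" "p dvd y" by (auto simp: in_prime_factors_iff)
    then show False using coprime_common_divisor_nat[OF assms, of p] by auto
  qed
  have pf: "prime_factors (x*y) = prime_factors x \<union> prime_factors y"
    using False by (simp add: prime_factors_product)
  show ?thesis unfolding hh_def pf
    by (simp add: prod.union_disjoint[OF _ _ disj] powr_mult)
qed

lemma hh_primepow: assumes "prime p"
  shows "hh a (p^Suc j) = real p powr (a * Suc j) * (1 - real p powr (-a))"
proof -
  have "prime_factors (p^Suc j) = set_mset (replicate_mset (Suc j) p)"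
    using prime_factorization_prime_power[OF assms] by metis
  then have "prime_factors (p^Suc j) = {p}" by simp
  moreover have "real (p^Suc j) = real p powr real (Suc j)"
    using prime_gt_0_nat[OF assms] by (subst powr_realpow) auto
  ultimately show ?thesis unfolding hh_def by (simp add: powr_powr mult.commute)
qed

lemma sum_divisors_primepow: assumes p: "prime p"
  shows "(\<Sum>d | d dvd p^k. hh a d) = real (p^k) powr a"
proof -
  have p1: "p > 1" using p prime_gt_1_nat by blast
  have set: "{d. d dvd p^k} = (\<lambda>i. p^i) ` {..k}"
    using divides_primepow_nat[OF p] by auto
  have inj: "inj_on (\<lambda>i. p^i) {..k}"
    using p1 by (auto simp: inj_on_def power_inject_exp)
  have pk: "\<And>k. real (p^k) powr a = real p powr (a * k)"
    using p1 prime_gt_0_nat[OF p] by (simp add: powr_realpow[symmetric] powr_powr mult.commute)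
  have "(\<Sum>i\<le>k. hh a (p^i)) = real p powr (a * k)"
  proof (induction k)
    case 0
    then show ?case using p1 by (simp add: hh_def)
  next
    case (Suc k)
    have "(\<Sum>i\<le>Suc k. hh a (p^i)) = real p powr (a * k) + real p powr (a * Suc k) * (1 - real p powr (-a))"
      using Suc hh_primepow[OF p, of a k] by simp
    also have "\<dots> = real p powr (a * Suc k)"
      using p1 by (simp add: algebra_simps powr_add[symmetric])
    finally show ?case .
  qed
  then show ?thesis unfolding set using sum.reindex[OF inj, of "hh a"] pk by simp
qed

lemma sum_divisors_coprime:
  fixes a b :: nat
  assumes "coprime a b" "a > 0" "b > 0"
  shows "(\<Sum>d | d dvd a*b. f d) = (\<Sum>x | x dvd a. \<Sum>y | y dvd b. f (x*y))"
proof -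
  have fa: "finite {x. x dvd a}" using assms by simp
  have fb: "finite {y. y dvd b}" using assms by simp
  have bij: "bij_betw (\<lambda>(x,y). x*y) ({x. x dvd a} \<times> {y. y dvd b}) {d. d dvd a*b}"
  proof (rule bij_betwI')
    fix u v assume u: "u \<in> {x. x dvd a} \<times> {y. y dvd b}" and v: "v \<in> {x. x dvd a} \<times> {y. y dvd b}"
    obtain x y where xy: "u = (x,y)" "x dvd a" "y dvd b" using u by auto
    obtain x' y' where xy': "v = (x',y')" "x' dvd a" "y' dvd b" using v by auto
    show "((case u of (x, y) \<Rightarrow> x * y) = (case v of (x, y) \<Rightarrow> x * y)) = (u = v)"
    proof
      assume eq: "(case u of (x, y) \<Rightarrow> x * y) = (case v of (x, y) \<Rightarrow> x * y)"
      then have e: "x*y = x'*y'" using xy xy' by simp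
      have c1: "coprime x y'" using assms(1) xy(2) xy'(3) coprime_imp_coprime
        by (meson coprime_divisors)
      have c2: "coprime x' y" using assms(1) xy(3) xy'(2) by (meson coprime_divisors)
      have "x dvd x'*y'" using e by (metis dvd_triv_left)
      then have d1: "x dvd x'" using c1 by (simp add: coprime_dvd_mult_left_iff)
      have "x' dvd x*y" using e by (metis dvd_triv_left)
      then have d2: "x' dvd x" using c2 by (simp add: coprime_dvd_mult_left_iff)
      have "x = x'" using d1 d2 by (simp add: dvd_antisym)
      moreover have "x > 0" using xy(2) assms(2) by (auto intro: Nat.gr0I)
      ultimately have "y = y'" using e by simp
      then show "u = v" using xy xy' \<open>x = x'\<close> by simp
    qed simp
  next
    fix u assume "u \<in> {x. x dvd a} \<times> {y. y dvd b}"
    then show "(case u of (x, y) \<Rightarrow> x * y) \<in> {d. d dvd a*b}" by (auto intro: mult_dvd_mono)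
  next
    fix d assume "d \<in> {d. d dvd a*b}"
    then obtain x y where "d = x*y" "x dvd a" "y dvd b" using division_decomp by blast
    then show "\<exists>u\<in>{x. x dvd a} \<times> {y. y dvd b}. d = (case u of (x, y) \<Rightarrow> x * y)" by auto
  qed
  have "(\<Sum>d | d dvd a*b. f d) = (\<Sum>u\<in>{x. x dvd a} \<times> {y. y dvd b}. f (case u of (x, y) \<Rightarrow> x * y))"
    using sum.reindex_bij_betw[OF bij, of f] by simp
  also have "\<dots> = (\<Sum>x | x dvd a. \<Sum>y | y dvd b. f (x*y))"
    by (simp add: sum.cartesian_product split_def)
  finally show ?thesis .
qed

lemma sum_divisors_hh: "n > 0 \<Longrightarrow> (\<Sum>d | d dvd n. hh a d) = real n powr a"
proof (induction n rule: less_induct)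
  case (less n)
  show ?case
  proof (cases "n = 1")
    case True
    then show ?thesis by (simp add: hh_def)
  next
    case False
    then obtain p where p: "prime p" "p dvd n" using prime_factor_nat by blast
    define k where "k = multiplicity p n"
    obtain y where y: "n = p ^ k * y" "\<not> p dvd y"
    proof -
      have "n \<noteq> 0" "\<not> is_unit p" using less.prems p(1) by (auto simp: not_prime_unit)
      from multiplicity_decompose'[OF this] show ?thesis using that unfolding k_def by blast
    qed
    have k0: "k \<noteq> 0"
    proof
      assume "k = 0"
      then have "n = y" using y by simp
      with p(2) y(2) show False by simp
    qed
    have ypos: "y > 0"
    proof (rule ccontr)
      assume "\<not> y > 0"
      then have "y = 0" by simp
      then show False using y(1) less.prems by simp
    qed
    have p1: "p > 1" using p prime_gt_1_nat by blast
    have "p^k > 1" using p1 k0 by (metis One_nat_def bot_nat_0.not_eq_extremum one_less_power)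
    then have "1 * y < p^k * y" using ypos by (rule mult_strict_right_mono)
    then have ylt: "y < n" using y(1) by linarith
    have cop: "coprime (p^k) y" using prime_imp_coprime[OF p(1) y(2)] by simp
    have "(\<Sum>d | d dvd n. hh a d) = (\<Sum>x | x dvd p^k. \<Sum>z | z dvd y. hh a (x*z))"
      unfolding y(1) by (rule sum_divisors_coprime[OF cop _ ypos]) (use p1 in simp)
    also have "\<dots> = (\<Sum>x | x dvd p^k. \<Sum>z | z dvd y. hh a x * hh a z)"
    proof (intro sum.cong refl)
      fix x z assume "x \<in> {x. x dvd p^k}" "z \<in> {z. z dvd y}"
      then have "coprime x z" using coprime_divisors[of x "p^k" z y] cop by simp
      then show "hh a (x*z) = hh a x * hh a z" by (rule hh_mult)
    qed
    also have "\<dots> = (\<Sum>x | x dvd p^k. hh a x) * (\<Sum>z | z dvd y. hh a z)"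
      by (simp add: sum_product)
    also have "\<dots> = real (p^k) powr a * real y powr a"
      using sum_divisors_primepow[OF p(1)] less.IH[OF ylt ypos] by simp
    also have "\<dots> = real n powr a" using y(1) by (simp add: powr_mult)
    finally show ?thesis .
  qed
qed

lemma gcd_expand:
  assumes "m \<in> {1..N}" "n \<in> {1..N}"
  shows "real (gcd m n) powr a = (\<Sum>d\<in>{1..N}. if d dvd m \<and> d dvd n then hh a d else 0)"
proof -
  have g: "gcd m n > 0" using assms by simp
  have "{d\<in>{1..N}. d dvd m \<and> d dvd n} = {d. d dvd gcd m n}"
  proof safe
    fix d assume "d dvd gcd m n"
    then show "d \<in> {1..N}" using g assms dvd_imp_le[of d m] by (auto intro: Nat.gr0I dvd_pos_nat)
  qed auto
  then have "(\<Sum>d\<in>{1..N}. if d dvd m \<and> d dvd n then hh a d else 0) = (\<Sum>d | d dvd gcd m n. hh a d)"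
    by (simp add: sum.inter_filter[symmetric])
  also have "\<dots> = real (gcd m n) powr a" using sum_divisors_hh[OF g] .
  finally show ?thesis by simp
qed

lemma sum_multiples:
  fixes \<alpha> :: real
  assumes "d \<ge> 1"
  shows "(\<Sum>m\<in>{1..N}. if d dvd m then real m powr (-\<alpha>) else 0)
     = real d powr (-\<alpha>) * (\<Sum>k\<in>{1..N div d}. real k powr (-\<alpha>))"
proof -
  have img: "{m\<in>{1..N}. d dvd m} = (\<lambda>k. d*k) ` {1..N div d}"
  proof safe
    fix m assume "m \<in> {1..N}" "d dvd m"
    then obtain k where k: "m = d*k" by blast
    then have "k \<ge> 1" using \<open>m \<in> {1..N}\<close> by (cases k) auto
    moreover have "k \<le> N div d" using k \<open>m \<in> {1..N}\<close> assms
      by (simp add: less_eq_div_iff_mult_less_eq mult.commute)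
    ultimately show "m \<in> (\<lambda>k. d*k) ` {1..N div d}" using k by auto
  next
    fix k assume "k \<in> {1..N div d}"
    then show "d*k \<in> {1..N}" using assms
      by (auto simp: less_eq_div_iff_mult_less_eq mult.commute)
  qed auto
  have inj: "inj_on (\<lambda>k. d*k) {1..N div d}" using assms by (auto simp: inj_on_def)
  have "(\<Sum>m\<in>{1..N}. if d dvd m then real m powr (-\<alpha>) else 0) = (\<Sum>m\<in>{m\<in>{1..N}. d dvd m}. real m powr (-\<alpha>))"
    using sum.inter_filter[of "{1..N}" "\<lambda>m. real m powr (-\<alpha>)" "\<lambda>m. d dvd m"] by simp
  also have "\<dots> = (\<Sum>k\<in>{1..N div d}. real (d*k) powr (-\<alpha>))"
    unfolding img using sum.reindex[OF inj, of "\<lambda>m. real m powr (-\<alpha>)"] by simp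
  also have "\<dots> = (\<Sum>k\<in>{1..N div d}. real d powr (-\<alpha>) * real k powr (-\<alpha>))"
    by (intro sum.cong refl) (simp add: powr_mult)
  also have "\<dots> = real d powr (-\<alpha>) * (\<Sum>k\<in>{1..N div d}. real k powr (-\<alpha>))"
    by (simp add: sum_distrib_left)
  finally show ?thesis .
qed

lemma decomp:
  fixes \<alpha> :: real and N :: nat
  shows "(\<Sum>m\<in>{1..N}. \<Sum>n\<in>{1..N}. real (gcd m n) powr (2*\<alpha>) / (real (m*n)) powr \<alpha>)
    = (\<Sum>d\<in>{1..N}. hh (2*\<alpha>) d * (real d powr (-\<alpha>) * (\<Sum>k\<in>{1..N div d}. real k powr (-\<alpha>)))^2)"
proof -
  define u where "u d m = (if d dvd m then real m powr (-\<alpha>) else 0)" for d m :: nat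
  have "(\<Sum>m\<in>{1..N}. \<Sum>n\<in>{1..N}. real (gcd m n) powr (2*\<alpha>) / (real (m*n)) powr \<alpha>)
     = (\<Sum>m\<in>{1..N}. \<Sum>n\<in>{1..N}. \<Sum>d\<in>{1..N}. hh (2*\<alpha>) d * u d m * u d n)"
  proof (intro sum.cong refl)
    fix m n assume mn: "m \<in> {1..N}" "n \<in> {1..N}"
    have "real (gcd m n) powr (2*\<alpha>) / (real (m*n)) powr \<alpha>
       = (\<Sum>d\<in>{1..N}. if d dvd m \<and> d dvd n then hh (2*\<alpha>) d else 0) * (real m powr (-\<alpha>) * real n powr (-\<alpha>))"
      using gcd_expand[OF mn, of "2*\<alpha>"] mn by (simp add: powr_mult powr_minus divide_inverse)
    also have "\<dots> = (\<Sum>d\<in>{1..N}. hh (2*\<alpha>) d * u d m * u d n)"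
      unfolding sum_distrib_right by (intro sum.cong refl) (simp add: u_def)
    finally show "real (gcd m n) powr (2*\<alpha>) / (real (m*n)) powr \<alpha> = (\<Sum>d\<in>{1..N}. hh (2*\<alpha>) d * u d m * u d n)" .
  qed
  also have "\<dots> = (\<Sum>d\<in>{1..N}. \<Sum>m\<in>{1..N}. \<Sum>n\<in>{1..N}. hh (2*\<alpha>) d * u d m * u d n)"
  proof -
    have "(\<Sum>m\<in>{1..N}. \<Sum>n\<in>{1..N}. \<Sum>d\<in>{1..N}. hh (2*\<alpha>) d * u d m * u d n)
       = (\<Sum>m\<in>{1..N}. \<Sum>d\<in>{1..N}. \<Sum>n\<in>{1..N}. hh (2*\<alpha>) d * u d m * u d n)"
      by (rule sum.cong[OF refl], rule sum.swap)
    also have "\<dots> = (\<Sum>d\<in>{1..N}. \<Sum>m\<in>{1..N}. \<Sum>n\<in>{1..N}. hh (2*\<alpha>) d * u d m * u d n)"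
      by (rule sum.swap)
    finally show ?thesis .
  qed
  also have "\<dots> = (\<Sum>d\<in>{1..N}. hh (2*\<alpha>) d * ((\<Sum>m\<in>{1..N}. u d m) * (\<Sum>n\<in>{1..N}. u d n)))"
    unfolding sum_product by (simp add: sum_distrib_left mult.assoc)
  also have "\<dots> = (\<Sum>d\<in>{1..N}. hh (2*\<alpha>) d * (real d powr (-\<alpha>) * (\<Sum>k\<in>{1..N div d}. real k powr (-\<alpha>)))^2)"
  proof (intro sum.cong refl)
    fix d assume "d \<in> {1..N}"
    then have "d \<ge> 1" by simp
    from sum_multiples[OF this, of \<alpha> N] show "hh (2*\<alpha>) d * ((\<Sum>m\<in>{1..N}. u d m) * (\<Sum>n\<in>{1..N}. u d n)) =
       hh (2*\<alpha>) d * (real d powr (-\<alpha>) * (\<Sum>k\<in>{1..N div d}. real k powr (-\<alpha>)))^2"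
      unfolding u_def by (simp add: power2_eq_square)
  qed
  finally show ?thesis .
qed



lemma powr_mvt:
  fixes a b e :: real
  assumes "0 < a" "a < b"
  shows "\<exists>z. a < z \<and> z < b \<and> b powr e - a powr e = (b - a) * (e * z powr (e - 1))"
proof -
  have "\<And>x. a \<le> x \<Longrightarrow> x \<le> b \<Longrightarrow> DERIV (\<lambda>x. x powr e) x :> e * x powr (e-1)"
    using assms by (intro has_real_derivative_powr) auto
  from MVT2[OF assms(2) this] show ?thesis by auto
qed

lemma step_bounds:
  fixes s a b :: real
  assumes "0 < s" "s < 1" "0 < a" "a < b"
  shows "(1-s) * (b-a) * b powr (-s) \<le> b powr (1-s) - a powr (1-s)"
    and "b powr (1-s) - a powr (1-s) \<le> (1-s) * (b-a) * a powr (-s)"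
proof -
  obtain z where z: "a < z" "z < b" "b powr (1-s) - a powr (1-s) = (b - a) * ((1-s) * z powr (1 - s - 1))"
    using powr_mvt[OF assms(3,4), of "1-s"] by blast
  have e: "1 - s - 1 = -s" by simp
  have "b powr (-s) \<le> z powr (-s)" using powr_mono2'[of "-s" z b] z assms by auto
  moreover have "z powr (-s) \<le> a powr (-s)" using powr_mono2'[of "-s" a z] z assms by auto
  moreover have h: "0 \<le> (1-s)*(b-a)" using assms by simp
  ultimately have "(1-s)*(b-a) * b powr (-s) \<le> (1-s)*(b-a) * z powr (-s)"
      "(1-s)*(b-a) * z powr (-s) \<le> (1-s)*(b-a) * a powr (-s)"
    by (auto intro: mult_left_mono)
  moreover have "b powr (1-s) - a powr (1-s) = (1-s)*(b-a) * z powr (-s)"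
    using z(3) unfolding e by simp
  ultimately show "(1-s) * (b-a) * b powr (-s) \<le> b powr (1-s) - a powr (1-s)"
    and "b powr (1-s) - a powr (1-s) \<le> (1-s) * (b-a) * a powr (-s)"
    by linarith+
qed

lemma partial_upper:
  fixes s :: real
  assumes "0 < s" "s < 1"
  shows "(\<Sum>k\<in>{1..M}. real k powr (-s)) \<le> real M powr (1-s) / (1-s)"
proof (induction M)
  case 0
  then show ?case by simp
next
  case (Suc M)
  have "real (Suc M) powr (-s) \<le> (real (Suc M) powr (1-s) - real M powr (1-s)) / (1-s)"
  proof (cases "M = 0")
    case True
    then show ?thesis using assms by (simp add: field_simps)
  next
    case False
    then have "(1-s) * (real (Suc M) - real M) * real (Suc M) powr (-s) \<le> real (Suc M) powr (1-s) - real M powr (1-s)"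
      using assms by (intro step_bounds(1)) auto
    then show ?thesis using assms by (simp add: field_simps)
  qed
  moreover have "(real (Suc M) powr (1-s) - real M powr (1-s)) / (1-s) + real M powr (1 - s) / (1 - s)
     = real (Suc M) powr (1-s) / (1-s)" by (simp add: diff_divide_distrib)
  ultimately show ?case using Suc by simp
qed

lemma partial_lower:
  fixes s :: real
  assumes "0 < s" "s < 1"
  shows "(real (Suc M) powr (1-s) - 1) / (1-s) \<le> (\<Sum>k\<in>{1..M}. real k powr (-s))"
proof (induction M)
  case 0
  then show ?case by simp
next
  case (Suc M)
  have "(1-s) * (real (Suc (Suc M)) - real (Suc M)) * real (Suc M) powr (-s) \<ge> real (Suc (Suc M)) powr (1-s) - real (Suc M) powr (1-s)"
    using assms by (intro step_bounds(2)) auto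
  then have "(real (Suc (Suc M)) powr (1-s) - real (Suc M) powr (1-s)) / (1-s) \<le> real (Suc M) powr (-s)"
    using assms by (simp add: field_simps)
  moreover have "(real (Suc (Suc M)) powr (1-s) - real (Suc M) powr (1-s)) / (1-s) + (real (Suc M) powr (1-s) - 1) / (1-s)
     = (real (Suc (Suc M)) powr (1-s) - 1) / (1-s)" by (simp add: diff_divide_distrib)
  ultimately show ?case using Suc by simp
qed

lemma tail_bound:
  fixes r :: real
  assumes "0 < r" "N \<ge> 1"
  shows "(\<Sum>n<M. real (Suc (n+N)) powr (-(1+r))) \<le> (real N powr (-r) - real (N+M) powr (-r)) / r"
proof (induction M)
  case 0
  then show ?case by simp
next
  case (Suc M)
  define q where "q = -(1+r)"
  define a where "a = real (N+M)"
  define b where "b = real (N + Suc M)"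
  have ab: "0 < a" "a < b" "b - a = 1" using assms unfolding a_def b_def by auto
  obtain z where z: "a < z" "z < b"
     "b powr (-r) - a powr (-r) = (b - a) * (-r * z powr (-r - 1))"
    using powr_mvt[OF ab(1,2), of "-r"] by auto
  have q: "-r - 1 = q" unfolding q_def by simp
  have "b powr q \<le> z powr q"
    using powr_mono2'[of q z b] z ab assms unfolding q_def by auto
  moreover have "a powr (-r) - b powr (-r) = r * z powr q" using z(3) ab(3) q by simp
  ultimately have "r * b powr q \<le> a powr (-r) - b powr (-r)" using assms by simp
  then have "b powr q \<le> (a powr (-r) - b powr (-r)) / r" using assms by (simp add: field_simps)
  moreover have "(real N powr (-r) - a powr (-r)) / r + (a powr (-r) - b powr (-r)) / r
     = (real N powr (-r) - b powr (-r)) / r" by (simp add: diff_divide_distrib)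
  moreover have "real (Suc (M+N)) = b" unfolding b_def by simp
  ultimately show ?case using Suc unfolding a_def b_def q_def by (simp add: add.commute)
qed

lemma A_est:
  fixes \<alpha> :: real and N d :: nat
  assumes "0 < \<alpha>" "\<alpha> < 1" "1 \<le> d" "d \<le> N"
  shows "\<bar>(\<Sum>k\<in>{1..N div d}. real k powr (-\<alpha>))^2 - ((real N / real d) powr (1-\<alpha>) / (1-\<alpha>))^2\<bar>
          \<le> 2 * (real N / real d) powr (1-\<alpha>) / (1-\<alpha>)^2"
proof -
  define M where "M = N div d"
  define x where "x = real N / real d"
  define A where "A = (\<Sum>k\<in>{1..M}. real k powr (-\<alpha>))"
  define X where "X = x powr (1-\<alpha>) / (1-\<alpha>)"
  have b: "0 < 1 - \<alpha>" using assms by simp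
  have Npos: "N = d * M + N mod d" unfolding M_def by simp
  have "N mod d < d" using assms by simp
  have dpos: "real d > 0" using assms by simp
  have "real N = real d * real M + real (N mod d)" using Npos by (metis of_nat_add of_nat_mult)
  then have xM: "x = real M + real (N mod d) / real d" unfolding x_def using dpos by (simp add: field_simps)
  have "real (N mod d) / real d < 1" using \<open>N mod d < d\<close> dpos by simp
  then have x1: "real M \<le> x" "x < real M + 1" using xM by auto
  have M0: "real M \<ge> 0" by simp
  have "A \<le> real M powr (1-\<alpha>) / (1-\<alpha>)" unfolding A_def using partial_upper[of \<alpha> M] assms by simp
  also have "\<dots> \<le> X" unfolding X_def using x1 b by (intro divide_right_mono powr_mono2) auto
  finally have AX: "A \<le> X" .
  have "(x powr (1-\<alpha>) - 1) / (1-\<alpha>) \<le> (real (Suc M) powr (1-\<alpha>) - 1) / (1-\<alpha>)"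
    using x1 b M0 by (intro divide_right_mono diff_right_mono powr_mono2) auto
  also have "\<dots> \<le> A" unfolding A_def using partial_lower[of \<alpha> M] assms by simp
  finally have "X - A \<le> 1/(1-\<alpha>)" unfolding X_def by (simp add: diff_divide_distrib)
  have A0: "0 \<le> A" unfolding A_def by (auto intro: sum_nonneg)
  have "X^2 - A^2 = (X - A) * (X + A)" by (simp add: power2_eq_square algebra_simps)
  also have "\<dots> \<le> (1/(1-\<alpha>)) * (2*X)"
    using \<open>X - A \<le> 1/(1-\<alpha>)\<close> AX A0 b by (intro mult_mono) auto
  finally have "X^2 - A^2 \<le> 2 * x powr (1-\<alpha>) / (1-\<alpha>)^2" unfolding X_def by (simp add: power2_eq_square)
  moreover have "A^2 \<le> X^2" using AX A0 by (simp add: power_mono)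
  ultimately show ?thesis unfolding A_def X_def x_def M_def by simp
qed



definition gs :: "real \<Rightarrow> nat \<Rightarrow> real" where
  "gs a d = hh a d / real d ^ 2"

lemma sum_shift1: "(\<Sum>k\<in>{1..K}. f k) = (\<Sum>n<K. f (Suc n))"
  by (induction K) (auto simp: atLeastAtMostSuc_conv add.commute)

lemma finite_identity:
  "(\<Sum>n\<in>{1..M}. real n powr a / real n ^ 2)
     = (\<Sum>(d,k)\<in>{(d,k). d \<in> {1..M} \<and> k \<in> {1..M} \<and> d*k \<le> M}. gs a d / real k ^ 2)"
proof -
  define P where "P = {(d,k). d \<in> {1..M} \<and> k \<in> {1..M} \<and> d*k \<le> M}"
  define Sg where "Sg = Sigma {1..M} (\<lambda>n. {d. d dvd n})"
  have "(\<Sum>n\<in>{1..M}. real n powr a / real n ^ 2) = (\<Sum>n\<in>{1..M}. \<Sum>d\<in>{d. d dvd n}. hh a d / real n ^ 2)"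
    by (intro sum.cong refl) (simp add: sum_divisors_hh sum_divide_distrib[symmetric])
  also have "\<dots> = (\<Sum>(n,d)\<in>Sg. hh a d / real n ^ 2)"
    unfolding Sg_def by (rule sum.Sigma) auto
  also have "\<dots> = (\<Sum>(d,k)\<in>P. hh a d / real (d*k) ^ 2)"
  proof -
    have bij: "bij_betw (\<lambda>(d,k). (d*k, d)) P Sg"
    proof (rule bij_betwI[where g = "\<lambda>(n,d). (d, n div d)"])
      show "(\<lambda>(d,k). (d*k, d)) \<in> P \<rightarrow> Sg" unfolding P_def Sg_def by auto
      show "(\<lambda>(n,d). (d, n div d)) \<in> Sg \<rightarrow> P"
      proof
        fix x assume "x \<in> Sg"
        then obtain n d where x: "x = (n,d)" "n \<in> {1..M}" "d dvd n" unfolding Sg_def by auto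
        then obtain k where k: "n = d*k" by blast
        have "d \<ge> 1" "k \<ge> 1" using x k by (auto intro: Nat.gr0I)
        moreover have "d \<le> M" "k \<le> M" using x k \<open>d\<ge>1\<close> \<open>k\<ge>1\<close> 
          by (auto intro: order.trans[of _ "d*k"])
        ultimately show "(case x of (n,d) \<Rightarrow> (d, n div d)) \<in> P" unfolding P_def using x k by auto
      qed
      show "\<And>x. x \<in> P \<Longrightarrow> (case case x of (d, k) \<Rightarrow> (d * k, d) of (n, d) \<Rightarrow> (d, n div d)) = x"
        unfolding P_def by auto
      show "\<And>y. y \<in> Sg \<Longrightarrow> (case case y of (n, d) \<Rightarrow> (d, n div d) of (d, k) \<Rightarrow> (d * k, d)) = y"
        unfolding Sg_def by auto
    qed
    show ?thesis using sum.reindex_bij_betw[OF bij, of "\<lambda>(n,d). hh a d / real n ^ 2"]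
      by (simp add: split_def)
  qed
  also have "\<dots> = (\<Sum>(d,k)\<in>P. gs a d / real k ^ 2)"
    unfolding P_def gs_def by (intro sum.cong refl) (auto simp: power_mult_distrib)
  finally show ?thesis unfolding P_def .
qed

lemma gs_nonneg: "a \<ge> 0 \<Longrightarrow> 0 \<le> gs a d"
  unfolding gs_def using hh_nonneg by simp

lemma gs_le: assumes "a \<ge> 0" shows "gs a (Suc n) \<le> real (Suc n) powr (a - 2)"
proof -
  have "gs a (Suc n) \<le> real (Suc n) powr a / real (Suc n) ^ 2"
    unfolding gs_def using hh_le[OF assms, of "Suc n"] by (intro divide_right_mono) auto
  also have "\<dots> = real (Suc n) powr (a - 2)"
    by (simp add: powr_diff del: of_nat_Suc)
  finally show ?thesis .
qed

lemma summable_powr_Suc: "s < -1 \<Longrightarrow> summable (\<lambda>n. real (Suc n) powr s)"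
  using summable_real_powr_iff[of s] summable_Suc_iff[of "\<lambda>n. real n powr s"] by simp

lemma dirichlet_identity:
  assumes "0 < a" "a < 1"
  shows "(\<Sum>n. gs a (Suc n)) * zeta_real 2 = zeta_real (2 - a)"
proof -
  define G where "G = (\<Sum>n. gs a (Suc n))"
  have sG: "summable (\<lambda>n. gs a (Suc n))"
  proof (rule summable_comparison_test')
    show "summable (\<lambda>n. real (Suc n) powr (a-2))" using assms by (intro summable_powr_Suc) simp
    fix n :: nat
    have "0 \<le> gs a (Suc n)" using assms by (intro gs_nonneg) simp
    then show "norm (gs a (Suc n)) \<le> real (Suc n) powr (a-2)" using gs_le[of a n] assms by simp
  qed
  have z2eq: "\<And>n. 1 / real (Suc n) powr 2 = 1 / real (Suc n) ^ 2"
    by (simp del: of_nat_Suc)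
  have s2: "summable (\<lambda>n. 1 / real (Suc n) powr 2)"
  proof -
    have "\<And>n. 1 / real (Suc n) powr 2 = real (Suc n) powr (-2)" by (metis powr_minus_divide)
    then show ?thesis using summable_powr_Suc[of "-2"] by simp
  qed
  have zAeq: "\<And>n. 1 / real (Suc n) powr (2 - a) = real (Suc n) powr a / real (Suc n) ^ 2"
  proof -
    fix n
    have "1 / real (Suc n) powr (2-a) = real (Suc n) powr (a-2)" by (metis powr_minus_divide minus_diff_eq)
    also have "\<dots> = real (Suc n) powr a / real (Suc n) ^ 2" by (simp add: powr_diff del: of_nat_Suc)
    finally show "1 / real (Suc n) powr (2 - a) = real (Suc n) powr a / real (Suc n) ^ 2" .
  qed
  have sA: "summable (\<lambda>n. 1 / real (Suc n) powr (2-a))"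
  proof -
    have "\<And>n. 1 / real (Suc n) powr (2-a) = real (Suc n) powr (a-2)" by (metis powr_minus_divide minus_diff_eq)
    then show ?thesis using summable_powr_Suc[of "a-2"] assms by simp
  qed
  define HG where "HG K = (\<Sum>d\<in>{1..K}. gs a d)" for K
  define Z where "Z K = (\<Sum>k\<in>{1..K}. 1 / real k ^ 2)" for K
  define T where "T M = (\<Sum>n\<in>{1..M}. real n powr a / real n ^ 2)" for M
  have HGl: "HG \<longlonglongrightarrow> G" unfolding HG_def sum_shift1 G_def using summable_LIMSEQ[OF sG] by simp
  have Zl: "Z \<longlonglongrightarrow> zeta_real 2" unfolding Z_def sum_shift1 zeta_real_def
    using summable_LIMSEQ[OF s2] unfolding z2eq by simp
  have Tl: "T \<longlonglongrightarrow> zeta_real (2-a)" unfolding T_def sum_shift1 zeta_real_def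
    using summable_LIMSEQ[OF sA] unfolding zAeq by simp
  have sm: "strict_mono (\<lambda>K::nat. K^2)" by (auto simp: strict_mono_def power_strict_mono)
  have l1: "(\<lambda>K. HG K * Z K) \<longlonglongrightarrow> G * zeta_real 2" using HGl Zl by (rule tendsto_mult)
  have l2: "(\<lambda>K. HG (K^2) * Z (K^2)) \<longlonglongrightarrow> G * zeta_real 2"
    using LIMSEQ_subseq_LIMSEQ[OF l1 sm] by (simp add: comp_def)
  have l3: "(\<lambda>K. T (K^2)) \<longlonglongrightarrow> zeta_real (2-a)"
    using LIMSEQ_subseq_LIMSEQ[OF Tl sm] by (simp add: comp_def)
  define F where "F = (\<lambda>(d,k). gs a d / real k ^ 2)"
  have Fnn: "\<And>x. 0 \<le> F x" unfolding F_def using gs_nonneg assms by (auto split: prod.splits)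
  have prodsum: "\<And>K. HG K * Z K = (\<Sum>x\<in>{1..K}\<times>{1..K}. F x)"
    unfolding HG_def Z_def F_def sum_product sum.cartesian_product by (simp add: divide_inverse)
  have Teq: "\<And>K. T (K^2) = (\<Sum>x\<in>{(d,k). d \<in> {1..K^2} \<and> k \<in> {1..K^2} \<and> d*k \<le> K^2}. F x)"
    unfolding T_def F_def by (rule finite_identity)
  have lo: "\<And>K. HG K * Z K \<le> T (K^2)"
  proof -
    fix K :: nat
    have "{1..K}\<times>{1..K} \<subseteq> {(d,k). d \<in> {1..K^2} \<and> k \<in> {1..K^2} \<and> d*k \<le> K^2}"
      by (auto simp: power2_eq_square intro: mult_mono order.trans[of _ K])
    moreover have "finite {(d,k). d \<in> {1..K^2} \<and> k \<in> {1..K^2} \<and> d*k \<le> K^2}"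
      by (rule finite_subset[of _ "{1..K^2}\<times>{1..K^2}"]) auto
    ultimately show "HG K * Z K \<le> T (K^2)" unfolding prodsum Teq
      using Fnn by (intro sum_mono2) auto
  qed
  have hi: "\<And>K. T (K^2) \<le> HG (K^2) * Z (K^2)"
  proof -
    fix K :: nat
    have "{(d,k). d \<in> {1..K^2} \<and> k \<in> {1..K^2} \<and> d*k \<le> K^2} \<subseteq> {1..K^2}\<times>{1..K^2}"
      by auto
    then show "T (K^2) \<le> HG (K^2) * Z (K^2)" unfolding prodsum Teq
      by (intro sum_mono2) (auto simp: Fnn)
  qed
  have "(\<lambda>K. T (K^2)) \<longlonglongrightarrow> G * zeta_real 2"
    by (rule tendsto_sandwich[OF _ _ l1 l2]) (auto intro: always_eventually lo hi)
  then show ?thesis using l3 LIMSEQ_unique unfolding G_def by blast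
qed



lemma zeta2_pos: "zeta_real 2 > 0"
proof -
  have "\<And>n. 1 / real (Suc n) powr 2 = real (Suc n) powr (-2)" by (metis powr_minus_divide)
  then have s: "summable (\<lambda>n. 1 / real (Suc n) powr 2)" using summable_powr_Suc[of "-2"] by simp
  show ?thesis unfolding zeta_real_def by (rule suminf_pos[OF s]) simp
qed

lemma w_bounds:
  fixes \<alpha> :: real assumes "0 < \<alpha>" "d \<ge> 1"
  shows "0 \<le> hh (2*\<alpha>) d * (real d powr (-\<alpha>))^2" "hh (2*\<alpha>) d * (real d powr (-\<alpha>))^2 \<le> 1"
proof -
  show "0 \<le> hh (2*\<alpha>) d * (real d powr (-\<alpha>))^2" using hh_nonneg[of "2*\<alpha>" d] assms by simp
  have e: "(real d powr (-\<alpha>))^2 = 1 / real d powr (2*\<alpha>)"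
    using assms by (simp add: power2_eq_square powr_add[symmetric] powr_minus_divide[symmetric])
  have "hh (2*\<alpha>) d \<le> real d powr (2*\<alpha>)" using hh_le[of "2*\<alpha>" d] assms by simp
  then show "hh (2*\<alpha>) d * (real d powr (-\<alpha>))^2 \<le> 1" unfolding e using assms by (simp add: field_simps)
qed

lemma main_term_eq:
  fixes \<alpha> :: real and N d :: nat
  assumes "0 < \<alpha>" "\<alpha> < 1" "d \<ge> 1"
  shows "hh (2*\<alpha>) d * (real d powr (-\<alpha>))^2 * ((real N / real d) powr (1-\<alpha>) / (1-\<alpha>))^2
     = (real N powr (1-\<alpha>))^2 / (1-\<alpha>)^2 * gs (2*\<alpha>) d"
proof -
  have dpos: "real d > 0" using assms by simp
  have "real d powr (-\<alpha>) * (real N / real d) powr (1-\<alpha>) = real N powr (1-\<alpha>) / real d"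
  proof -
    have "real d powr (-\<alpha>) * (real N / real d) powr (1-\<alpha>) = real N powr (1-\<alpha>) * (real d powr (-\<alpha>) / real d powr (1-\<alpha>))"
      using dpos by (simp add: powr_divide)
    also have "real d powr (-\<alpha>) / real d powr (1-\<alpha>) = real d powr (-1)"
      using dpos by (simp add: powr_diff[symmetric])
    also have "\<dots> = 1 / real d" using dpos by (simp add: powr_minus_divide)
    finally show ?thesis by simp
  qed
  then have "(real d powr (-\<alpha>))^2 * ((real N / real d) powr (1-\<alpha>))^2 = (real N powr (1-\<alpha>))^2 / real d ^ 2"
    by (metis power_divide power_mult_distrib)
  then show ?thesis unfolding gs_def by (simp add: power_divide field_simps)
qed

lemma tail_est:
  fixes \<alpha> :: real assumes "0 < \<alpha>" "\<alpha> < 1/2" "N \<ge> 1"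
  shows "0 \<le> (\<Sum>n. gs (2*\<alpha>) (Suc n)) - (\<Sum>d\<in>{1..N}. gs (2*\<alpha>) d)"
    "(\<Sum>n. gs (2*\<alpha>) (Suc n)) - (\<Sum>d\<in>{1..N}. gs (2*\<alpha>) d) \<le> real N powr (-(1-2*\<alpha>)) / (1-2*\<alpha>)"
proof -
  define a where "a = 2*\<alpha>"
  have a: "0 < a" "a < 1" using assms unfolding a_def by auto
  have sG: "summable (\<lambda>n. gs a (Suc n))"
  proof (rule summable_comparison_test')
    show "summable (\<lambda>n. real (Suc n) powr (a-2))" using a by (intro summable_powr_Suc) simp
    fix n :: nat
    have "0 \<le> gs a (Suc n)" using a by (intro gs_nonneg) simp
    then show "norm (gs a (Suc n)) \<le> real (Suc n) powr (a-2)" using gs_le[of a n] a by simp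
  qed
  have eq: "(\<Sum>n. gs a (Suc n)) - (\<Sum>d\<in>{1..N}. gs a d) = (\<Sum>n. gs a (Suc (n + N)))"
    using suminf_minus_initial_segment[OF sG, of N] unfolding sum_shift1 by simp
  have sT: "summable (\<lambda>n. gs a (Suc (n + N)))"
    using summable_ignore_initial_segment[OF sG, of N] by simp
  show "0 \<le> (\<Sum>n. gs (2*\<alpha>) (Suc n)) - (\<Sum>d\<in>{1..N}. gs (2*\<alpha>) d)"
    unfolding a_def[symmetric] eq using a by (intro suminf_nonneg[OF sT] gs_nonneg) simp
  have "(\<Sum>n. gs a (Suc (n + N))) \<le> real N powr (-(1-a)) / (1-a)"
  proof (rule suminf_le_const[OF sT])
    fix M
    have "(\<Sum>n<M. gs a (Suc (n + N))) \<le> (\<Sum>n<M. real (Suc (n+N)) powr (-(1+(1-a))))"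
    proof (rule sum_mono)
      fix n
      have "-(1+(1-a)) = a - 2" by simp
      then show "gs a (Suc (n + N)) \<le> real (Suc (n+N)) powr (-(1+(1-a)))" using gs_le[of a "n+N"] a by simp
    qed
    also have "\<dots> \<le> (real N powr (-(1-a)) - real (N+M) powr (-(1-a))) / (1-a)"
      using a assms by (intro tail_bound) auto
    also have "\<dots> \<le> real N powr (-(1-a)) / (1-a)"
      using a by (intro divide_right_mono) auto
    finally show "(\<Sum>n<M. gs a (Suc (n + N))) \<le> real N powr (-(1-a)) / (1-a)" .
  qed
  then show "(\<Sum>n. gs (2*\<alpha>) (Suc n)) - (\<Sum>d\<in>{1..N}. gs (2*\<alpha>) d) \<le> real N powr (-(1-2*\<alpha>)) / (1-2*\<alpha>)"
    unfolding a_def[symmetric] eq .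
qed

lemma err_est:
  fixes \<alpha> :: real assumes "0 < \<alpha>" "\<alpha> < 1/2" "N \<ge> 1"
  shows "\<bar>(\<Sum>m\<in>{1..N}. \<Sum>n\<in>{1..N}. real (gcd m n) powr (2*\<alpha>) / (real (m*n)) powr \<alpha>)
     - (real N powr (1-\<alpha>))^2 / (1-\<alpha>)^2 * (\<Sum>d\<in>{1..N}. gs (2*\<alpha>) d)\<bar> \<le> 2 * real N / (\<alpha> * (1-\<alpha>)^2)"
proof -
  define w where "w d = hh (2*\<alpha>) d * (real d powr (-\<alpha>))^2" for d :: nat
  define A where "A d = (\<Sum>k\<in>{1..N div d}. real k powr (-\<alpha>))" for d
  define X where "X d = (real N / real d) powr (1-\<alpha>) / (1-\<alpha>)" for d :: nat
  have b: "0 < 1 - \<alpha>" using assms by simp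
  have S: "(\<Sum>m\<in>{1..N}. \<Sum>n\<in>{1..N}. real (gcd m n) powr (2*\<alpha>) / (real (m*n)) powr \<alpha>) = (\<Sum>d\<in>{1..N}. w d * A d ^ 2)"
    unfolding decomp w_def A_def by (simp add: power_mult_distrib mult.assoc)
  have M: "(real N powr (1-\<alpha>))^2 / (1-\<alpha>)^2 * (\<Sum>d\<in>{1..N}. gs (2*\<alpha>) d) = (\<Sum>d\<in>{1..N}. w d * X d ^ 2)"
    unfolding sum_distrib_left w_def X_def using main_term_eq[of \<alpha> _ N] assms by (intro sum.cong refl) simp
  have "\<bar>(\<Sum>d\<in>{1..N}. w d * A d ^ 2) - (\<Sum>d\<in>{1..N}. w d * X d ^ 2)\<bar> = \<bar>\<Sum>d\<in>{1..N}. w d * (A d ^ 2 - X d ^ 2)\<bar>"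
    by (simp add: sum_subtractf[symmetric] algebra_simps)
  also have "\<dots> \<le> (\<Sum>d\<in>{1..N}. \<bar>w d * (A d ^ 2 - X d ^ 2)\<bar>)" by (rule sum_abs)
  also have "\<dots> \<le> (\<Sum>d\<in>{1..N}. 2 * (real N / real d) powr (1-\<alpha>) / (1-\<alpha>)^2)"
  proof (rule sum_mono)
    fix d assume d: "d \<in> {1..N}"
    have w: "0 \<le> w d" "w d \<le> 1" unfolding w_def using w_bounds[of \<alpha> d] assms d by auto
    have e: "\<bar>A d ^ 2 - X d ^ 2\<bar> \<le> 2 * (real N / real d) powr (1-\<alpha>) / (1-\<alpha>)^2"
      unfolding A_def X_def using A_est[of \<alpha> d N] assms d by simp
    have "\<bar>w d * (A d ^ 2 - X d ^ 2)\<bar> = w d * \<bar>A d ^ 2 - X d ^ 2\<bar>" using w by (simp add: abs_mult)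
    also have "\<dots> \<le> 1 * \<bar>A d ^ 2 - X d ^ 2\<bar>" using w by (intro mult_right_mono) auto
    finally show "\<bar>w d * (A d ^ 2 - X d ^ 2)\<bar> \<le> 2 * (real N / real d) powr (1-\<alpha>) / (1-\<alpha>)^2"
      using e by simp
  qed
  also have "\<dots> = 2 / (1-\<alpha>)^2 * real N powr (1-\<alpha>) * (\<Sum>d\<in>{1..N}. real d powr (-(1-\<alpha>)))"
    unfolding sum_distrib_left
  proof (intro sum.cong refl)
    fix d assume "d \<in> {1..N}"
    then have "real d > 0" by simp
    then show "2 * (real N / real d) powr (1-\<alpha>) / (1-\<alpha>)^2 = 2 / (1-\<alpha>)^2 * real N powr (1-\<alpha>) * real d powr (-(1-\<alpha>))"
      unfolding powr_minus_divide by (simp add: powr_divide)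
  qed
  also have "\<dots> \<le> 2 / (1-\<alpha>)^2 * real N powr (1-\<alpha>) * (real N powr (1-(1-\<alpha>)) / (1-(1-\<alpha>)))"
    using partial_upper[of "1-\<alpha>" N] assms by (intro mult_left_mono) auto
  also have "\<dots> = 2 * real N / (\<alpha> * (1-\<alpha>)^2)"
  proof -
    have "real N powr (1-\<alpha>) * real N powr \<alpha> = real N" using assms by (simp add: powr_add[symmetric])
    then show ?thesis by (simp add: field_simps)
  qed
  finally show ?thesis unfolding S M .
qed

theorem mainTheorem3:
  fixes \<alpha> :: real
  assumes "0 < \<alpha>" and "\<alpha> < 1/2"
  shows "\<exists>C. \<forall>N::nat. N \<ge> 1 \<longrightarrow>
    \<bar>(1 / real N) * (\<Sum>m\<in>{1..N}. \<Sum>n\<in>{1..N}.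
        real (gcd m n) powr (2*\<alpha>) / (real (m*n)) powr \<alpha>)
     - zeta_real (2 - 2*\<alpha>) / (zeta_real 2 * (1 - \<alpha>)^2) * real N powr (1 - 2*\<alpha>)\<bar> \<le> C"
proof (intro exI allI impI)
  fix N :: nat assume N: "N \<ge> 1"
  define S where "S = (\<Sum>m\<in>{1..N}. \<Sum>n\<in>{1..N}. real (gcd m n) powr (2*\<alpha>) / (real (m*n)) powr \<alpha>)"
  define C0 where "C0 = (real N powr (1-\<alpha>))^2 / (1-\<alpha>)^2"
  define H where "H = (\<Sum>d\<in>{1..N}. gs (2*\<alpha>) d)"
  define G where "G = (\<Sum>n. gs (2*\<alpha>) (Suc n))"
  have b: "0 < 1 - \<alpha>" "0 < 1 - 2*\<alpha>" using assms by auto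
  have Npos: "real N > 0" using N by simp
  have C0pos: "C0 \<ge> 0" unfolding C0_def by simp
  have e1: "\<bar>S - C0 * H\<bar> \<le> 2 * real N / (\<alpha> * (1-\<alpha>)^2)"
    unfolding S_def C0_def H_def using err_est[OF assms N] .
  have t: "0 \<le> G - H" "G - H \<le> real N powr (-(1-2*\<alpha>)) / (1-2*\<alpha>)"
    unfolding G_def H_def using tail_est[OF assms N] by auto
  have pw: "(real N powr (1-\<alpha>))^2 = real N * real N powr (1 - 2*\<alpha>)"
  proof -
    have "(real N powr (1-\<alpha>))^2 = real N powr (1 + (1 - 2*\<alpha>))"
      by (simp add: power2_eq_square powr_add[symmetric])
    also have "\<dots> = real N powr 1 * real N powr (1 - 2*\<alpha>)" by (rule powr_add)
    also have "\<dots> = real N * real N powr (1 - 2*\<alpha>)" using Npos by simp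
    finally show ?thesis .
  qed
  have "C0 * (G - H) \<le> C0 * (real N powr (-(1-2*\<alpha>)) / (1-2*\<alpha>))"
    using t C0pos by (intro mult_left_mono) auto
  also have "\<dots> = real N / ((1-2*\<alpha>) * (1-\<alpha>)^2)"
  proof -
    have "real N powr (1 - 2*\<alpha>) * real N powr (-(1-2*\<alpha>)) = 1"
      using Npos by (simp add: powr_add[symmetric])
    then show ?thesis unfolding C0_def pw using b by (simp add: field_simps)
  qed
  finally have e2: "C0 * (G - H) \<le> real N / ((1-2*\<alpha>) * (1-\<alpha>)^2)" .
  have "\<bar>S - C0 * G\<bar> \<le> \<bar>S - C0 * H\<bar> + C0 * (G - H)"
  proof -
    have "S - C0*G = (S - C0*H) - C0*(G-H)" by (simp add: algebra_simps)
    then have "\<bar>S - C0*G\<bar> \<le> \<bar>S - C0*H\<bar> + \<bar>C0*(G-H)\<bar>" by (metis abs_triangle_ineq4)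
    moreover have "\<bar>C0*(G-H)\<bar> = C0*(G-H)" using t C0pos by simp
    ultimately show ?thesis by simp
  qed
  also have "\<dots> \<le> 2 * real N / (\<alpha> * (1-\<alpha>)^2) + real N / ((1-2*\<alpha>) * (1-\<alpha>)^2)"
    using e1 e2 by simp
  finally have e3: "\<bar>S - C0 * G\<bar> \<le> real N * (2 / (\<alpha> * (1-\<alpha>)^2) + 1 / ((1-2*\<alpha>) * (1-\<alpha>)^2))"
    by (simp add: field_simps)
  have Gz: "G = zeta_real (2 - 2*\<alpha>) / zeta_real 2"
    using dirichlet_identity[of "2*\<alpha>"] assms zeta2_pos unfolding G_def by (simp add: field_simps)
  have "zeta_real (2 - 2*\<alpha>) / (zeta_real 2 * (1 - \<alpha>)^2) * real N powr (1 - 2*\<alpha>) = C0 * G / real N"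
    unfolding C0_def pw Gz using Npos by (simp add: field_simps)
  then have "\<bar>(1 / real N) * S - zeta_real (2 - 2*\<alpha>) / (zeta_real 2 * (1 - \<alpha>)^2) * real N powr (1 - 2*\<alpha>)\<bar>
      = \<bar>S - C0 * G\<bar> / real N"
    using Npos by (simp add: field_simps)
  also have "\<dots> \<le> 2 / (\<alpha> * (1-\<alpha>)^2) + 1 / ((1-2*\<alpha>) * (1-\<alpha>)^2)"
    using e3 Npos by (simp add: field_simps)
  finally show "\<bar>(1 / real N) * (\<Sum>m\<in>{1..N}. \<Sum>n\<in>{1..N}.
        real (gcd m n) powr (2*\<alpha>) / (real (m*n)) powr \<alpha>)
     - zeta_real (2 - 2*\<alpha>) / (zeta_real 2 * (1 - \<alpha>)^2) * real N powr (1 - 2*\<alpha>)\<bar>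
     \<le> 2 / (\<alpha> * (1-\<alpha>)^2) + 1 / ((1-2*\<alpha>) * (1-\<alpha>)^2)"
    unfolding S_def .
qed


end
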